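(* Let $a=\log_2 3$. For integers $K\ge 1$ and $1\le\ell\le K$ define $g_K(\ell)=\max(0,\,a-K/\ell)$, let $S^+(K)=\{1\le\ell\le K: g_K(\ell)>0\}$, and define $\Theta_K=\max_{\ell\in S^+(K)}g_K(\ell)\,/\,\min_{\ell\in S^+(K)}g_K(\ell)$. Then: (1) $\max_{S^+(K)}g_K=a-1$, attained at $\ell=K$, and $\min_{S^+(K)}g_K=a-K/\ell_*(K)$ with $\ell_*(K)=\lfloor K/a\rfloor+1$. (2) Writing $K/a=\lfloor K/a\rfloor+r_K$ with $r_K\in(0,1)$, $$\Theta_K=\frac{a-1}{a}\cdot\frac{\lfloor K/a\rfloor+1}{1-r_K}.$$ (3) The sequence $(\Theta_K)$ is unbounded; along the numerators of the even-indexed convergents of the continued fraction of $\log_2 3$, $K\in\{3,19,84,1054,50508,176251,\ldots\}$, one has $r_K\to 1^-$ and $\Theta_K\to\infty$. *)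

theory Defs
  imports "HOL-Analysis.Analysis"
begin

definition a_log :: real where "a_log = log 2 3"

definition gK :: "nat \<Rightarrow> nat \<Rightarrow> real" where
  "gK K l = max 0 (a_log - real K / real l)"

definition Splus :: "nat \<Rightarrow> nat set" where
  "Splus K = {l \<in> {1..K}. gK K l > 0}"

definition Theta :: "nat \<Rightarrow> real" where
  "Theta K = Max (gK K ` Splus K) / Min (gK K ` Splus K)"

definition lstar :: "nat \<Rightarrow> nat" where
  "lstar K = nat \<lfloor>real K / a_log\<rfloor> + 1"

definition rK :: "nat \<Rightarrow> real" where
  "rK K = real K / a_log - of_int \<lfloor>real K / a_log\<rfloor>"

fun cf_rem :: "real \<Rightarrow> nat \<Rightarrow> real" where
  "cf_rem x 0 = x"
| "cf_rem x (Suc n) = 1 / (cf_rem x n - of_int \<lfloor>cf_rem x n\<rfloor>)"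

definition cf_coeff :: "real \<Rightarrow> nat \<Rightarrow> int" where
  "cf_coeff x n = \<lfloor>cf_rem x n\<rfloor>"

fun conv_num :: "real \<Rightarrow> nat \<Rightarrow> int" where
  "conv_num x 0 = cf_coeff x 0"
| "conv_num x (Suc 0) = cf_coeff x 1 * cf_coeff x 0 + 1"
| "conv_num x (Suc (Suc n)) = cf_coeff x (Suc (Suc n)) * conv_num x (Suc n) + conv_num x n"

definition Kseq :: "nat \<Rightarrow> nat" where
  "Kseq n = nat (conv_num a_log (2 * (n + 1)))"

end

theory Submission
  imports Defs
begin


lemma a_log_eq: "a_log = ln 3 / ln 2" by (simp add: a_log_def log_def)

lemma a_log_gt1: "a_log > 1"
  unfolding a_log_eq by (simp add: ln_less_cancel_iff)

lemma pow_less_iff: "(2::real)^p < 3^q \<longleftrightarrow> real p < real q * a_log"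
proof -
  have "(2::real)^p < 3^q \<longleftrightarrow> ln ((2::real)^p) < ln (3^q)" by simp
  also have "\<dots> \<longleftrightarrow> real p * ln 2 < real q * ln 3" by (simp add: ln_realpow)
  also have "\<dots> \<longleftrightarrow> real p < real q * a_log" unfolding a_log_eq
    by (simp add: field_simps)
  finally show ?thesis .
qed

lemma pow_gt_iff: "(2::real)^p > 3^q \<longleftrightarrow> real p > real q * a_log"
proof -
  have "(2::real)^p > 3^q \<longleftrightarrow> ln ((2::real)^p) > ln (3^q)" by simp
  also have "\<dots> \<longleftrightarrow> real p * ln 2 > real q * ln 3" by (simp add: ln_realpow)
  also have "\<dots> \<longleftrightarrow> real p > real q * a_log" unfolding a_log_eq
    by (simp add: field_simps)
  finally show ?thesis .
qed

lemma pow_eq_imp: assumes "real q * a_log = real p" "p \<ge> 1" shows False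
proof -
  have "\<not> (2::real)^p < 3^q" "\<not> (2::real)^p > 3^q"
    using assms(1) pow_less_iff pow_gt_iff by auto
  hence "(2::real)^p = 3^q" by linarith
  hence "(2::nat)^p = 3^q" by (metis of_nat_eq_iff of_nat_numeral of_nat_power)
  moreover have "even ((2::nat)^p)" using assms(2) by simp
  moreover have "odd ((3::nat)^q)" by simp
  ultimately show False by simp
qed

lemma a_log_irrat: "a_log \<notin> \<rat>"
proof
  assume "a_log \<in> \<rat>"
  then obtain m n :: int where n: "n > 0" and e: "a_log = of_int m / of_int n"
    by (auto elim: Rats_cases')
  have "of_int m = a_log * of_int n" using n e by (simp add: field_simps)
  moreover have "a_log * of_int n > 0" using n a_log_gt1 by simp
  ultimately have m: "m > 0" by simp
  have H: "real (nat n) * a_log = real (nat m)" using \<open>of_int m = a_log * of_int n\<close> n m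
    by simp
  have "nat m \<ge> 1" using m by simp
  from pow_eq_imp[OF H this] show False .
qed

fun PP :: "real \<Rightarrow> nat \<Rightarrow> int" where
  "PP x 0 = 0" | "PP x (Suc 0) = 1"
| "PP x (Suc (Suc n)) = cf_coeff x n * PP x (Suc n) + PP x n"

fun QQ :: "real \<Rightarrow> nat \<Rightarrow> int" where
  "QQ x 0 = 1" | "QQ x (Suc 0) = 0"
| "QQ x (Suc (Suc n)) = cf_coeff x n * QQ x (Suc n) + QQ x n"

definition EE :: "real \<Rightarrow> nat \<Rightarrow> real" where
  "EE x n = of_int (QQ x n) * x - of_int (PP x n)"

lemma EE_rec: "EE x (Suc (Suc n)) = of_int (cf_coeff x n) * EE x (Suc n) + EE x n"
  by (simp add: EE_def algebra_simps)

lemma conv_num_PP: "conv_num x n = PP x (Suc (Suc n))"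
  by (induction x n rule: conv_num.induct) (simp_all add: numeral_2_eq_2)

context fixes x :: real assumes irr: "x \<notin> \<rat>"
begin

lemma rem_irr: "cf_rem x n \<notin> \<rat>"
proof (induction n)
  case 0 then show ?case using irr by simp
next
  case (Suc n)
  show ?case
  proof
    assume "cf_rem x (Suc n) \<in> \<rat>"
    hence "1 / (cf_rem x n - of_int \<lfloor>cf_rem x n\<rfloor>) \<in> \<rat>" by simp
    hence "inverse (1 / (cf_rem x n - of_int \<lfloor>cf_rem x n\<rfloor>)) \<in> \<rat>" by (rule Rats_inverse)
    hence "cf_rem x n - of_int \<lfloor>cf_rem x n\<rfloor> \<in> \<rat>" by simp
    hence "cf_rem x n - of_int \<lfloor>cf_rem x n\<rfloor> + of_int \<lfloor>cf_rem x n\<rfloor> \<in> \<rat>"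
      by (intro Rats_add) auto
    with Suc show False by simp
  qed
qed

lemma frac_pos: "0 < cf_rem x n - of_int (cf_coeff x n)"
proof -
  have "cf_rem x n \<noteq> of_int (cf_coeff x n)" using rem_irr[of n] by auto
  then show ?thesis unfolding cf_coeff_def
    by (metis diff_gt_0_iff_gt floor_le_iff less_eq_real_def linorder_not_le of_int_floor_le)
qed

lemma frac_lt1: "cf_rem x n - of_int (cf_coeff x n) < 1"
  unfolding cf_coeff_def by linarith

lemma rem_Suc_gt1: "cf_rem x (Suc n) > 1"
  using frac_pos[of n] frac_lt1[of n] by (simp add: cf_coeff_def)

lemma coeff_Suc_ge1: "cf_coeff x (Suc n) \<ge> 1"
  using rem_Suc_gt1[of n] unfolding cf_coeff_def by linarith

lemma rem_EE: "cf_rem x n = - EE x n / EE x (Suc n) \<and> EE x (Suc n) \<noteq> 0"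
proof (induction n)
  case 0 then show ?case by (simp add: EE_def)
next
  case (Suc n)
  define r where "r = cf_rem x n"
  define u where "u = EE x n"
  define v where "v = EE x (Suc n)"
  define a where "a = (of_int (cf_coeff x n) :: real)"
  have rv: "r = - u / v" "v \<noteq> 0" using Suc r_def u_def v_def by auto
  have f: "r - a > 0" using frac_pos[of n] r_def a_def by simp
  have w: "EE x (Suc (Suc n)) = a * v + u" using EE_rec a_def u_def v_def by simp
  have w2: "a * v + u = -(r - a) * v" using rv by (simp add: field_simps)
  have wne: "EE x (Suc (Suc n)) \<noteq> 0" using w w2 f rv(2) by simp
  have "cf_rem x (Suc n) = 1 / (r - a)" using r_def a_def by (simp add: cf_coeff_def)
  also have "\<dots> = - v / EE x (Suc (Suc n))" unfolding w w2 using f rv(2) by (simp add: field_simps)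
  finally show ?case using wne v_def by simp
qed

lemma EE_frac: "EE x (Suc (Suc n)) = -(cf_rem x n - of_int (cf_coeff x n)) * EE x (Suc n)"
proof -
  have rv: "cf_rem x n = - EE x n / EE x (Suc n)" "EE x (Suc n) \<noteq> 0" using rem_EE[of n] by auto
  show ?thesis unfolding EE_rec using rv by (simp add: field_simps)
qed

lemma EE_sign: "(even n \<longrightarrow> EE x (Suc n) < 0) \<and> (odd n \<longrightarrow> EE x (Suc n) > 0)"
proof (induction n)
  case 0 then show ?case by (simp add: EE_def)
next
  case (Suc n)
  define f where "f = cf_rem x n - of_int (cf_coeff x n)"
  have e: "EE x (Suc (Suc n)) = -f * EE x (Suc n)" unfolding f_def by (rule EE_frac)
  have f: "f > 0" using frac_pos[of n] f_def by simp
  show ?case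
  proof (cases "even n")
    case True
    then have "EE x (Suc n) < 0" using Suc by simp
    then have "f * EE x (Suc n) < 0" using f by (simp add: mult_pos_neg)
    then have "-f * EE x (Suc n) > 0" by simp
    then show ?thesis using e True by simp
  next
    case False
    then have "EE x (Suc n) > 0" using Suc by simp
    then have "f * EE x (Suc n) > 0" using f by simp
    then have "-f * EE x (Suc n) < 0" by simp
    then show ?thesis using e False by simp
  qed
qed

lemma EE_abs_dec: "\<bar>EE x (Suc (Suc n))\<bar> \<le> \<bar>EE x (Suc n)\<bar>"
proof -
  have "\<bar>EE x (Suc (Suc n))\<bar> = (cf_rem x n - of_int (cf_coeff x n)) * \<bar>EE x (Suc n)\<bar>"
    using EE_frac[of n] frac_pos[of n] by (simp add: abs_mult)
  also have "\<dots> \<le> 1 * \<bar>EE x (Suc n)\<bar>" using frac_lt1[of n]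
    by (intro mult_right_mono) auto
  finally show ?thesis by simp
qed

lemma EE_abs_le1: "\<bar>EE x (Suc n)\<bar> \<le> 1"
proof (induction n)
  case 0 then show ?case by (simp add: EE_def)
next
  case (Suc n) then show ?case using EE_abs_dec[of n] by linarith
qed

lemma EE_half: "\<bar>EE x (Suc (Suc (Suc n)))\<bar> \<le> \<bar>EE x (Suc n)\<bar> / 2"
proof -
  define f where "f = cf_rem x n - of_int (cf_coeff x n)"
  define g where "g = cf_rem x (Suc n) - of_int (cf_coeff x (Suc n))"
  define k where "k = (of_int (cf_coeff x (Suc n)) :: real)"
  have f: "0 < f" "f < 1" using frac_pos[of n] frac_lt1[of n] f_def by auto
  have g: "0 < g" "g < 1" using frac_pos[of "Suc n"] frac_lt1[of "Suc n"] g_def by auto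
  have k: "k \<ge> 1" using coeff_Suc_ge1[of n] k_def by simp
  have "cf_rem x (Suc n) = 1 / f" using f_def by (simp add: cf_coeff_def)
  hence "g = 1 / f - k" using g_def k_def by simp
  hence fg: "f * g = 1 - f * k" using f by (simp add: field_simps)
  have "f * k \<ge> f" using k f by simp
  hence "f * g \<le> 1 - f" using fg by simp
  moreover have "f * g < f" using f g by simp
  ultimately have fg2: "f * g \<le> 1/2" by linarith
  have "\<bar>EE x (Suc (Suc (Suc n)))\<bar> = g * (f * \<bar>EE x (Suc n)\<bar>)"
    using EE_frac[of "Suc n"] EE_frac[of n] f g f_def g_def by (simp add: abs_mult)
  also have "\<dots> = (f * g) * \<bar>EE x (Suc n)\<bar>" by simp
  also have "\<dots> \<le> (1/2) * \<bar>EE x (Suc n)\<bar>" using fg2 by (intro mult_right_mono) auto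
  finally show ?thesis by simp
qed

lemma EE_odd_bound: "\<bar>EE x (Suc (2 * k))\<bar> \<le> (1/2) ^ k"
proof (induction k)
  case 0 then show ?case by (simp add: EE_def)
next
  case (Suc k)
  have "Suc (2 * Suc k) = Suc (Suc (Suc (2 * k)))" by simp
  then show ?case using EE_half[of "2*k"] Suc by simp
qed

lemma EE_even_tendsto: "(\<lambda>n. EE x (2 * n + 4)) \<longlonglongrightarrow> 0"
proof (rule Lim_null_comparison)
  show "\<forall>\<^sub>F n in sequentially. norm (EE x (2 * n + 4)) \<le> (1/2) ^ n"
  proof (intro always_eventually allI)
    fix n
    have e: "2 * n + 4 = Suc (Suc (2 * (n+1)))" by simp
    have "\<bar>EE x (2 * n + 4)\<bar> \<le> \<bar>EE x (Suc (2 * (n+1)))\<bar>"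
      unfolding e by (rule EE_abs_dec)
    also have "\<dots> \<le> (1/2)^(n+1)" by (rule EE_odd_bound)
    also have "\<dots> \<le> (1/2)^n" by (simp add: power_decreasing)
    finally show "norm (EE x (2 * n + 4)) \<le> (1/2) ^ n" by simp
  qed
  show "(\<lambda>n. (1/2::real) ^ n) \<longlonglongrightarrow> 0" by (rule LIMSEQ_realpow_zero) auto
qed

lemma EE_even_pos: "EE x (2 * n + 4) > 0"
proof -
  have e: "2 * n + 4 = Suc (2 * n + 3)" by simp
  show ?thesis unfolding e using EE_sign[of "2*n+3"] by simp
qed

lemma QQ_ge1: "QQ x (Suc (Suc n)) \<ge> 1 \<and> QQ x (Suc (Suc (Suc n))) \<ge> 1"
proof (induction n)
  case 0 then show ?case using coeff_Suc_ge1[of 0] by simp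
next
  case (Suc n)
  have "cf_coeff x (Suc (Suc n)) \<ge> 1" by (rule coeff_Suc_ge1)
  then have "QQ x (Suc (Suc (Suc (Suc n)))) \<ge> 1 * 1 + 1"
    using Suc by (simp only: QQ.simps) (intro add_mono mult_mono; simp)
  then show ?case using Suc by simp
qed

end


lemma part1:
  fixes K :: nat assumes K: "K \<ge> 1"
  shows "K \<in> Splus K \<and> gK K K = a_log - 1 \<and>
            Max (gK K ` Splus K) = a_log - 1 \<and>
            Min (gK K ` Splus K) = a_log - real K / real (lstar K) \<and>
            0 < rK K \<and> rK K < 1 \<and>
            Theta K = (a_log - 1) / a_log *
                      ((of_int \<lfloor>real K / a_log\<rfloor> + 1) / (1 - rK K))"
proof -
  define x where "x = a_log"
  have x1: "x > 1" using a_log_gt1 x_def by simp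
  define y where "y = real K / x"
  define f where "f = \<lfloor>y\<rfloor>"
  have y0: "y > 0" using K x1 y_def by simp
  have f0: "f \<ge> 0" using y0 f_def by simp
  have "real K * 1 < real K * x" using K x1 by (intro mult_strict_left_mono) auto
  then have yK: "y < real K" using x1 unfolding y_def by (simp add: divide_less_eq)
  have fne: "y \<noteq> of_int f"
  proof
    assume h: "y = of_int f"
    have "real (nat f) * a_log = real K" using h f0 x1 unfolding y_def x_def
      by (simp add: field_simps)
    from pow_eq_imp[OF this K] show False .
  qed
  have fy: "of_int f < y" "y < of_int f + 1" using fne f_def by linarith+
  define L where "L = lstar K"
  have L: "real L = of_int f + 1" "L = nat f + 1" using f0 unfolding L_def lstar_def f_def y_def x_def by simp_all
  have LK: "L \<le> K" using fy yK L by linarith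
  have gpos: "gK K l > 0 \<longleftrightarrow> y < real l" if "l \<ge> 1" for l
  proof -
    have "gK K l > 0 \<longleftrightarrow> real K / real l < x" unfolding gK_def x_def by auto
    also have "\<dots> \<longleftrightarrow> real K < x * real l" using that by (simp add: field_simps)
    also have "\<dots> \<longleftrightarrow> y < real l" unfolding y_def using x1 by (simp add: field_simps)
    finally show ?thesis .
  qed
  have S: "Splus K = {L..K}"
  proof (intro set_eqI iffI)
    fix l assume "l \<in> Splus K"
    then have l: "1 \<le> l" "l \<le> K" "gK K l > 0" unfolding Splus_def by auto
    then have "y < real l" using gpos by auto
    then have "f < int l" using fy by linarith
    then show "l \<in> {L..K}" using l L by auto
  next
    fix l assume "l \<in> {L..K}"
    then have l: "L \<le> l" "l \<le> K" by auto
    have "y < real l" using l(1) L fy by linarith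
    then show "l \<in> Splus K" unfolding Splus_def using l gpos L by auto
  qed
  have gval: "gK K l = x - real K / real l" if "l \<in> {L..K}" for l
  proof -
    have "l \<ge> 1" using that L by auto
    then have "gK K l > 0" using gpos that fy L by auto
    then show ?thesis unfolding gK_def x_def by auto
  qed
  have KS: "K \<in> Splus K" using S LK by auto
  have gKK: "gK K K = x - 1" using gval[of K] LK K by auto
  have mx: "Max (gK K ` Splus K) = x - 1"
  proof (rule Max_eqI)
    show "finite (gK K ` Splus K)" unfolding S by simp
    show "x - 1 \<in> gK K ` Splus K" using KS gKK by force
    fix z assume "z \<in> gK K ` Splus K"
    then obtain l where l: "l \<in> {L..K}" "z = gK K l" using S by auto
    have "l \<ge> 1" using l L by auto
    then have "real K / real l \<ge> 1" using l by simp
    then show "z \<le> x - 1" using l gval by simp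
  qed
  have mn: "Min (gK K ` Splus K) = x - real K / real L"
  proof (rule Min_eqI)
    show "finite (gK K ` Splus K)" unfolding S by simp
    show "x - real K / real L \<in> gK K ` Splus K" using gval[of L] LK S by force
    fix z assume "z \<in> gK K ` Splus K"
    then obtain l where l: "l \<in> {L..K}" "z = gK K l" using S by auto
    have "L \<ge> 1" using L by auto
    then have "real K / real l \<le> real K / real L" using l by (intro divide_left_mono) auto
    then show "x - real K / real L \<le> z" using l gval by simp
  qed
  have rK: "rK K = y - of_int f" unfolding rK_def y_def f_def x_def by simp
  have r01: "0 < rK K" "rK K < 1" using rK fy by auto
  have den: "x - real K / real L = x * (1 - rK K) / (of_int f + 1)"
    using rK L(1) f0 x1 unfolding y_def by (simp add: field_simps)
  have "Theta K = (x - 1) / (x - real K / real L)" unfolding Theta_def mx mn ..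
  also have "\<dots> = (x - 1) / x * ((of_int f + 1) / (1 - rK K))"
    unfolding den using r01 f0 x1 by (simp add: field_simps)
  finally have th: "Theta K = (x - 1) / x * ((of_int f + 1) / (1 - rK K))" .
  show ?thesis using KS gKK mx mn r01 th unfolding x_def L_def f_def y_def by simp
qed



definition cc :: "nat \<Rightarrow> nat \<Rightarrow> real" where "cc p q = 3^q / 2^p"
definition bnd :: "nat \<Rightarrow> nat \<Rightarrow> nat \<Rightarrow> nat \<Rightarrow> bool" where
  "bnd p q L U \<longleftrightarrow> real L \<le> cc p q * 10^30 \<and> cc p q * 10^30 \<le> real U"

lemma bnd_mult:
  assumes "bnd p1 q1 L1 U1" "bnd p2 q2 L2 U2" "L * 10^30 \<le> L1 * L2" "U1 * U2 \<le> U * 10^30"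
    "p = p1 + p2" "q = q1 + q2"
  shows "bnd p q L U"
proof -
  define D :: real where "D = 10^30"
  have c: "cc p q = cc p1 q1 * cc p2 q2" unfolding cc_def assms(5,6) by (simp add: power_add)
  have b1: "real L1 \<le> cc p1 q1 * D" "cc p1 q1 * D \<le> real U1" using assms(1) unfolding bnd_def D_def by auto
  have b2: "real L2 \<le> cc p2 q2 * D" "cc p2 q2 * D \<le> real U2" using assms(2) unfolding bnd_def D_def by auto
  have l: "real L * D \<le> real L1 * real L2" using assms(3) unfolding D_def
    by (metis of_nat_le_iff of_nat_mult of_nat_numeral of_nat_power)
  have u: "real U1 * real U2 \<le> real U * D" using assms(4) unfolding D_def
    by (metis of_nat_le_iff of_nat_mult of_nat_numeral of_nat_power)
  have D: "D > 0" unfolding D_def by simp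
  have "real L1 * real L2 \<le> (cc p1 q1 * D) * (cc p2 q2 * D)"
    using b1 b2 by (intro mult_mono) auto
  also have "\<dots> = (cc p q * D) * D" using c by simp
  finally have "real L * D \<le> (cc p q * D) * D" using l by linarith
  hence lo: "real L \<le> cc p q * D" using D by simp
  have c0: "cc p1 q1 * D \<ge> 0" "cc p2 q2 * D \<ge> 0" using D unfolding cc_def by auto
  have h1: "(cc p1 q1 * D) * (cc p2 q2 * D) \<le> real U1 * real U2"
    using b1 b2 c0 by (intro mult_mono) auto
  have h2: "(cc p q * D) * D = (cc p1 q1 * D) * (cc p2 q2 * D)" using c by simp
  have "(cc p q * D) * D \<le> real U * D" using u h1 h2 by linarith
  hence "cc p q * D \<le> real U" using D by simp
  with lo show ?thesis unfolding bnd_def D_def by simp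
qed

lemma bnd_gt: assumes "bnd p q L U" "10^30 < L" shows "real p < real q * a_log"
proof -
  have "real L > 10^30" using assms(2) by (metis of_nat_less_iff of_nat_numeral of_nat_power)
  hence "cc p q > 1" using assms(1) unfolding bnd_def by simp
  hence "(2::real)^p < 3^q" unfolding cc_def by simp
  thus ?thesis using pow_less_iff by simp
qed

lemma bnd_lt: assumes "bnd p q L U" "U < 10^30" shows "real q * a_log < real p"
proof -
  have "real U < 10^30" using assms(2) by (metis of_nat_less_iff of_nat_numeral of_nat_power)
  hence "cc p q < 1" using assms(1) unfolding bnd_def by simp
  hence "(2::real)^p > 3^q" unfolding cc_def by simp
  thus ?thesis using pow_gt_iff by simp
qed

lemma b_0_1: "bnd 0 1 3000000000000000000000000000000 3000000000000000000000000000000"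
  unfolding bnd_def cc_def by simp
lemma b_1_0: "bnd 1 0 500000000000000000000000000000 500000000000000000000000000000"
  unfolding bnd_def cc_def by simp

lemma coeff_from: "x \<notin> \<rat> \<Longrightarrow> m = Suc n \<Longrightarrow> cf_coeff x n = \<lfloor>- EE x n / EE x m\<rfloor>"
  using rem_EE[of x n] by (simp add: cf_coeff_def)

lemma floor_neg: fixes u v :: real and a :: int
  assumes "v < 0" "0 \<le> u + of_int a * v" "u + (of_int a + 1) * v < 0"
  shows "\<lfloor>- u / v\<rfloor> = a"
proof -
  define w where "w = - v"
  have w: "w > 0" using assms(1) w_def by simp
  have e: "- u / v = u / w" using w_def by simp
  have "of_int a * w \<le> u" using assms(2) w_def by (simp add: algebra_simps)
  hence "of_int a \<le> u / w" using w by (simp add: pos_le_divide_eq)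
  moreover have "u < (of_int a + 1) * w" using assms(3) w_def by (simp add: algebra_simps)
  hence "u / w < of_int a + 1" using w by (simp add: pos_divide_less_eq)
  ultimately show ?thesis unfolding e by linarith
qed

lemma floor_pos: fixes u v :: real and a :: int
  assumes "v > 0" "u + of_int a * v \<le> 0" "0 < u + (of_int a + 1) * v"
  shows "\<lfloor>- u / v\<rfloor> = a"
proof -
  have "of_int a * v \<le> - u" using assms(2) by (simp add: algebra_simps)
  hence "of_int a \<le> - u / v" by (metis assms(1) pos_le_divide_eq)
  moreover have "- u < (of_int a + 1) * v" using assms(3) by (simp add: algebra_simps)
  hence "- u / v < of_int a + 1" by (metis assms(1) pos_divide_less_eq)
  ultimately show ?thesis by linarith
qed

lemma b_1_1: "bnd 1 1 1500000000000000000000000000000 1500000000000000000000000000000" by (rule bnd_mult[OF b_0_1 b_1_0]) simp_all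
lemma b_2_1: "bnd 2 1 750000000000000000000000000000 750000000000000000000000000000" by (rule bnd_mult[OF b_1_0 b_1_1]) simp_all
lemma b_3_2: "bnd 3 2 1125000000000000000000000000000 1125000000000000000000000000000" by (rule bnd_mult[OF b_1_1 b_2_1]) simp_all
lemma b_5_3: "bnd 5 3 843750000000000000000000000000 843750000000000000000000000000" by (rule bnd_mult[OF b_2_1 b_3_2]) simp_all
lemma b_8_5: "bnd 8 5 949218750000000000000000000000 949218750000000000000000000000" by (rule bnd_mult[OF b_5_3 b_3_2]) simp_all
lemma b_11_7: "bnd 11 7 1067871093750000000000000000000 1067871093750000000000000000000" by (rule bnd_mult[OF b_3_2 b_8_5]) simp_all
lemma b_19_12: "bnd 19 12 1013643264770507812500000000000 1013643264770507812500000000000" by (rule bnd_mult[OF b_11_7 b_8_5]) simp_all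
lemma b_27_17: "bnd 27 17 962169192731380462646484375000 962169192731380462646484375000" by (rule bnd_mult[OF b_8_5 b_19_12]) simp_all
lemma b_46_29: "bnd 46 29 975296321781840447329159360378 975296321781840447329159360379" by (rule bnd_mult[OF b_27_17 b_19_12]) simp_all
lemma b_65_41: "bnd 65 41 988602547729612482393371161725 988602547729612482393371161727" by (rule bnd_mult[OF b_46_29 b_19_12]) simp_all
lemma b_84_53: "bnd 84 53 1002090314041086172591429831616 1002090314041086172591429831619" by (rule bnd_mult[OF b_19_12 b_65_41]) simp_all
lemma b_149_94: "bnd 149 94 990669037516185254480238885255 990669037516185254480238885261" by (rule bnd_mult[OF b_65_41 b_84_53]) simp_all
lemma b_233_147: "bnd 233 147 992739846915374660800648153515 992739846915374660800648153524" by (rule bnd_mult[OF b_149_94 b_84_53]) simp_all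
lemma b_317_200: "bnd 317 200 994814984956527605958119712817 994814984956527605958119712830" by (rule bnd_mult[OF b_233_147 b_84_53]) simp_all
lemma b_401_253: "bnd 401 253 996894460687865165172705018649 996894460687865165172705018666" by (rule bnd_mult[OF b_317_200 b_84_53]) simp_all
lemma b_485_306: "bnd 485 306 998978283176522037224839825879 998978283176522037224839825901" by (rule bnd_mult[OF b_401_253 b_84_53]) simp_all
lemma b_569_359: "bnd 569 359 1001066461508586079868240278305 1001066461508586079868240278331" by (rule bnd_mult[OF b_84_53 b_485_306]) simp_all
lemma b_1054_665: "bnd 1054 665 1000043655063443203007432856159 1000043655063443203007432856208" by (rule bnd_mult[OF b_569_359 b_485_306]) simp_all
lemma b_1539_971: "bnd 1539 971 999021893636852490313959710588 999021893636852490313959710659" by (rule bnd_mult[OF b_485_306 b_1054_665]) simp_all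
lemma b_2593_1636: "bnd 2593 1636 999065506001000355916297193358 999065506001000355916297193479" by (rule bnd_mult[OF b_1539_971 b_1054_665]) simp_all
lemma b_3647_2301: "bnd 3647 2301 999109120269048745301779813294 999109120269048745301779813465" by (rule bnd_mult[OF b_2593_1636 b_1054_665]) simp_all
lemma b_4701_2966: "bnd 4701 2966 999152736441080773368562871034 999152736441080773368562871255" by (rule bnd_mult[OF b_3647_2301 b_1054_665]) simp_all
lemma b_5755_3631: "bnd 5755 3631 999196354517179558643187819261 999196354517179558643187819532" by (rule bnd_mult[OF b_4701_2966 b_1054_665]) simp_all
lemma b_6809_4296: "bnd 6809 4296 999239974497428223280740660129 999239974497428223280740660450" by (rule bnd_mult[OF b_5755_3631 b_1054_665]) simp_all
lemma b_7863_4961: "bnd 7863 4961 999283596381909893065010349608 999283596381909893065010349979" by (rule bnd_mult[OF b_6809_4296 b_1054_665]) simp_all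
lemma b_8917_5626: "bnd 8917 5626 999327220170707697408647208742 999327220170707697408647209163" by (rule bnd_mult[OF b_7863_4961 b_1054_665]) simp_all
lemma b_9971_6291: "bnd 9971 6291 999370845863904769353321341819 999370845863904769353321342290" by (rule bnd_mult[OF b_8917_5626 b_1054_665]) simp_all
lemma b_11025_6956: "bnd 11025 6956 999414473461584245569881061463 999414473461584245569881061984" by (rule bnd_mult[OF b_9971_6291 b_1054_665]) simp_all
lemma b_12079_7621: "bnd 12079 7621 999458102963829266358511320638 999458102963829266358511321209" by (rule bnd_mult[OF b_11025_6956 b_1054_665]) simp_all
lemma b_13133_8286: "bnd 13133 8286 999501734370722975648892151568 999501734370722975648892152189" by (rule bnd_mult[OF b_12079_7621 b_1054_665]) simp_all
lemma b_14187_8951: "bnd 14187 8951 999545367682348521000357111577 999545367682348521000357112248" by (rule bnd_mult[OF b_13133_8286 b_1054_665]) simp_all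
lemma b_15241_9616: "bnd 15241 9616 999589002898789053602051735843 999589002898789053602051736564" by (rule bnd_mult[OF b_14187_8951 b_1054_665]) simp_all
lemma b_16295_10281: "bnd 16295 10281 999632640020127728273091997070 999632640020127728273091997841" by (rule bnd_mult[OF b_15241_9616 b_1054_665]) simp_all
lemma b_17349_10946: "bnd 17349 10946 999676279046447703462722772077 999676279046447703462722772898" by (rule bnd_mult[OF b_16295_10281 b_1054_665]) simp_all
lemma b_18403_11611: "bnd 18403 11611 999719919977832141250476315307 999719919977832141250476316178" by (rule bnd_mult[OF b_17349_10946 b_1054_665]) simp_all
lemma b_19457_12276: "bnd 19457 12276 999763562814364207346330739252 999763562814364207346330740173" by (rule bnd_mult[OF b_18403_11611 b_1054_665]) simp_all
lemma b_20511_12941: "bnd 20511 12941 999807207556127071090868501798 999807207556127071090868502769" by (rule bnd_mult[OF b_19457_12276 b_1054_665]) simp_all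
lemma b_21565_13606: "bnd 21565 13606 999850854203203905455434900487 999850854203203905455434901508" by (rule bnd_mult[OF b_20511_12941 b_1054_665]) simp_all
lemma b_22619_14271: "bnd 22619 14271 999894502755677887042296573701 999894502755677887042296574772" by (rule bnd_mult[OF b_21565_13606 b_1054_665]) simp_all
lemma b_23673_14936: "bnd 23673 14936 999938153213632196084800008761 999938153213632196084800009882" by (rule bnd_mult[OF b_22619_14271 b_1054_665]) simp_all
lemma b_24727_15601: "bnd 24727 15601 999981805577150016447530056949 999981805577150016447530058120" by (rule bnd_mult[OF b_23673_14936 b_1054_665]) simp_all
lemma b_25781_16266: "bnd 25781 16266 1000025459846314535626468455451 1000025459846314535626468456672" by (rule bnd_mult[OF b_1054_665 b_24727_15601]) simp_all
lemma b_50508_31867: "bnd 50508 31867 1000007264960237342531741974630 1000007264960237342531741977023" by (rule bnd_mult[OF b_25781_16266 b_24727_15601]) simp_all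
lemma b_75235_47468: "bnd 75235 47468 999989070405205600432745139427 999989070405205600432745142992" by (rule bnd_mult[OF b_24727_15601 b_50508_31867]) simp_all
lemma b_125743_79335: "bnd 125743 79335 999996335286039871372908334516 999996335286039871372908340475" by (rule bnd_mult[OF b_75235_47468 b_50508_31867]) simp_all
lemma b_176251_111202: "bnd 176251 111202 1000003600219653212703081749063 1000003600219653212703081757416" by (rule bnd_mult[OF b_50508_31867 b_125743_79335]) simp_all
lemma b_301994_190537: "bnd 301994 190537 999999935492499308853332045962 999999935492499308853332060275" by (rule bnd_mult[OF b_125743_79335 b_176251_111202]) simp_all
lemma s_1_1: "1 < 1 * a_log" using bnd_gt[OF b_1_1] by simp
lemma s_2_1: "1 * a_log < 2" using bnd_lt[OF b_2_1] by simp
lemma s_3_2: "3 < 2 * a_log" using bnd_gt[OF b_3_2] by simp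
lemma s_5_3: "3 * a_log < 5" using bnd_lt[OF b_5_3] by simp
lemma s_8_5: "5 * a_log < 8" using bnd_lt[OF b_8_5] by simp
lemma s_11_7: "11 < 7 * a_log" using bnd_gt[OF b_11_7] by simp
lemma s_19_12: "19 < 12 * a_log" using bnd_gt[OF b_19_12] by simp
lemma s_27_17: "17 * a_log < 27" using bnd_lt[OF b_27_17] by simp
lemma s_65_41: "41 * a_log < 65" using bnd_lt[OF b_65_41] by simp
lemma s_84_53: "84 < 53 * a_log" using bnd_gt[OF b_84_53] by simp
lemma s_149_94: "94 * a_log < 149" using bnd_lt[OF b_149_94] by simp
lemma s_485_306: "306 * a_log < 485" using bnd_lt[OF b_485_306] by simp
lemma s_569_359: "569 < 359 * a_log" using bnd_gt[OF b_569_359] by simp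
lemma s_1054_665: "1054 < 665 * a_log" using bnd_gt[OF b_1054_665] by simp
lemma s_1539_971: "971 * a_log < 1539" using bnd_lt[OF b_1539_971] by simp
lemma s_24727_15601: "15601 * a_log < 24727" using bnd_lt[OF b_24727_15601] by simp
lemma s_25781_16266: "25781 < 16266 * a_log" using bnd_gt[OF b_25781_16266] by simp
lemma s_50508_31867: "50508 < 31867 * a_log" using bnd_gt[OF b_50508_31867] by simp
lemma s_75235_47468: "47468 * a_log < 75235" using bnd_lt[OF b_75235_47468] by simp
lemma s_125743_79335: "79335 * a_log < 125743" using bnd_lt[OF b_125743_79335] by simp
lemma s_176251_111202: "176251 < 111202 * a_log" using bnd_gt[OF b_176251_111202] by simp
lemma s_301994_190537: "190537 * a_log < 301994" using bnd_lt[OF b_301994_190537] by simp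
lemma PP_0: "PP a_log 0 = 0" by simp
lemma PP_1: "PP a_log 1 = 1" by simp
lemma QQ_0: "QQ a_log 0 = 1" by simp
lemma QQ_1: "QQ a_log 1 = 0" by simp
lemma cf_0: "cf_coeff a_log 0 = 1"
proof -
  have "cf_coeff a_log 0 = \<lfloor>- EE a_log 0 / EE a_log 1\<rfloor>" by (rule coeff_from[OF a_log_irrat]) simp
  also have "\<dots> = 1" by (rule floor_neg) (use s_1_1 s_2_1 in \<open>simp_all add: EE_def PP_0 QQ_0 PP_1 QQ_1 algebra_simps\<close>)
  finally show ?thesis .
qed
lemma PP_2: "PP a_log 2 = 1" by (simp add: numeral_2_eq_2 cf_0)
lemma QQ_2: "QQ a_log 2 = 1" by (simp add: numeral_2_eq_2 cf_0)
lemma cf_1: "cf_coeff a_log 1 = 1"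
proof -
  have "cf_coeff a_log 1 = \<lfloor>- EE a_log 1 / EE a_log 2\<rfloor>" by (rule coeff_from[OF a_log_irrat]) simp
  also have "\<dots> = 1" by (rule floor_pos) (use s_2_1 s_3_2 in \<open>simp_all add: EE_def PP_1 QQ_1 PP_2 QQ_2 algebra_simps\<close>)
  finally show ?thesis .
qed
lemma PP_3: "PP a_log 3 = 2" by (simp add: numeral_3_eq_3 cf_0 cf_1[unfolded One_nat_def])
lemma QQ_3: "QQ a_log 3 = 1" by (simp add: numeral_3_eq_3 cf_0 cf_1[unfolded One_nat_def])
lemma cf_2: "cf_coeff a_log 2 = 1"
proof -
  have "cf_coeff a_log 2 = \<lfloor>- EE a_log 2 / EE a_log 3\<rfloor>" by (rule coeff_from[OF a_log_irrat]) simp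
  also have "\<dots> = 1" by (rule floor_neg) (use s_3_2 s_5_3 in \<open>simp_all add: EE_def PP_2 QQ_2 PP_3 QQ_3 algebra_simps\<close>)
  finally show ?thesis .
qed
lemma PP_4: "PP a_log 4 = 3" using PP.simps(3)[of a_log 2] by (simp add: cf_2 PP_3 PP_2)
lemma QQ_4: "QQ a_log 4 = 2" using QQ.simps(3)[of a_log 2] by (simp add: cf_2 QQ_3 QQ_2)
lemma cf_3: "cf_coeff a_log 3 = 2"
proof -
  have "cf_coeff a_log 3 = \<lfloor>- EE a_log 3 / EE a_log 4\<rfloor>" by (rule coeff_from[OF a_log_irrat]) simp
  also have "\<dots> = 2" by (rule floor_pos) (use s_8_5 s_11_7 in \<open>simp_all add: EE_def PP_3 QQ_3 PP_4 QQ_4 algebra_simps\<close>)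
  finally show ?thesis .
qed
lemma PP_5: "PP a_log 5 = 8" using PP.simps(3)[of a_log 3] by (simp add: cf_3 PP_4 PP_3)
lemma QQ_5: "QQ a_log 5 = 5" using QQ.simps(3)[of a_log 3] by (simp add: cf_3 QQ_4 QQ_3)
lemma cf_4: "cf_coeff a_log 4 = 2"
proof -
  have "cf_coeff a_log 4 = \<lfloor>- EE a_log 4 / EE a_log 5\<rfloor>" by (rule coeff_from[OF a_log_irrat]) simp
  also have "\<dots> = 2" by (rule floor_neg) (use s_19_12 s_27_17 in \<open>simp_all add: EE_def PP_4 QQ_4 PP_5 QQ_5 algebra_simps\<close>)
  finally show ?thesis .
qed
lemma PP_6: "PP a_log 6 = 19" using PP.simps(3)[of a_log 4] by (simp add: cf_4 PP_5 PP_4)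
lemma QQ_6: "QQ a_log 6 = 12" using QQ.simps(3)[of a_log 4] by (simp add: cf_4 QQ_5 QQ_4)
lemma cf_5: "cf_coeff a_log 5 = 3"
proof -
  have "cf_coeff a_log 5 = \<lfloor>- EE a_log 5 / EE a_log 6\<rfloor>" by (rule coeff_from[OF a_log_irrat]) simp
  also have "\<dots> = 3" by (rule floor_pos) (use s_65_41 s_84_53 in \<open>simp_all add: EE_def PP_5 QQ_5 PP_6 QQ_6 algebra_simps\<close>)
  finally show ?thesis .
qed
lemma PP_7: "PP a_log 7 = 65" using PP.simps(3)[of a_log 5] by (simp add: cf_5 PP_6 PP_5)
lemma QQ_7: "QQ a_log 7 = 41" using QQ.simps(3)[of a_log 5] by (simp add: cf_5 QQ_6 QQ_5)
lemma cf_6: "cf_coeff a_log 6 = 1"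
proof -
  have "cf_coeff a_log 6 = \<lfloor>- EE a_log 6 / EE a_log 7\<rfloor>" by (rule coeff_from[OF a_log_irrat]) simp
  also have "\<dots> = 1" by (rule floor_neg) (use s_84_53 s_149_94 in \<open>simp_all add: EE_def PP_6 QQ_6 PP_7 QQ_7 algebra_simps\<close>)
  finally show ?thesis .
qed
lemma PP_8: "PP a_log 8 = 84" using PP.simps(3)[of a_log 6] by (simp add: cf_6 PP_7 PP_6)
lemma QQ_8: "QQ a_log 8 = 53" using QQ.simps(3)[of a_log 6] by (simp add: cf_6 QQ_7 QQ_6)
lemma cf_7: "cf_coeff a_log 7 = 5"
proof -
  have "cf_coeff a_log 7 = \<lfloor>- EE a_log 7 / EE a_log 8\<rfloor>" by (rule coeff_from[OF a_log_irrat]) simp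
  also have "\<dots> = 5" by (rule floor_pos) (use s_485_306 s_569_359 in \<open>simp_all add: EE_def PP_7 QQ_7 PP_8 QQ_8 algebra_simps\<close>)
  finally show ?thesis .
qed
lemma PP_9: "PP a_log 9 = 485" using PP.simps(3)[of a_log 7] by (simp add: cf_7 PP_8 PP_7)
lemma QQ_9: "QQ a_log 9 = 306" using QQ.simps(3)[of a_log 7] by (simp add: cf_7 QQ_8 QQ_7)
lemma cf_8: "cf_coeff a_log 8 = 2"
proof -
  have "cf_coeff a_log 8 = \<lfloor>- EE a_log 8 / EE a_log 9\<rfloor>" by (rule coeff_from[OF a_log_irrat]) simp
  also have "\<dots> = 2" by (rule floor_neg) (use s_1054_665 s_1539_971 in \<open>simp_all add: EE_def PP_8 QQ_8 PP_9 QQ_9 algebra_simps\<close>)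
  finally show ?thesis .
qed
lemma PP_10: "PP a_log 10 = 1054" using PP.simps(3)[of a_log 8] by (simp add: cf_8 PP_9 PP_8)
lemma QQ_10: "QQ a_log 10 = 665" using QQ.simps(3)[of a_log 8] by (simp add: cf_8 QQ_9 QQ_8)
lemma cf_9: "cf_coeff a_log 9 = 23"
proof -
  have "cf_coeff a_log 9 = \<lfloor>- EE a_log 9 / EE a_log 10\<rfloor>" by (rule coeff_from[OF a_log_irrat]) simp
  also have "\<dots> = 23" by (rule floor_pos) (use s_24727_15601 s_25781_16266 in \<open>simp_all add: EE_def PP_9 QQ_9 PP_10 QQ_10 algebra_simps\<close>)
  finally show ?thesis .
qed
lemma PP_11: "PP a_log 11 = 24727" using PP.simps(3)[of a_log 9] by (simp add: cf_9 PP_10 PP_9)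
lemma QQ_11: "QQ a_log 11 = 15601" using QQ.simps(3)[of a_log 9] by (simp add: cf_9 QQ_10 QQ_9)
lemma cf_10: "cf_coeff a_log 10 = 2"
proof -
  have "cf_coeff a_log 10 = \<lfloor>- EE a_log 10 / EE a_log 11\<rfloor>" by (rule coeff_from[OF a_log_irrat]) simp
  also have "\<dots> = 2" by (rule floor_neg) (use s_50508_31867 s_75235_47468 in \<open>simp_all add: EE_def PP_10 QQ_10 PP_11 QQ_11 algebra_simps\<close>)
  finally show ?thesis .
qed
lemma PP_12: "PP a_log 12 = 50508" using PP.simps(3)[of a_log 10] by (simp add: cf_10 PP_11 PP_10)
lemma QQ_12: "QQ a_log 12 = 31867" using QQ.simps(3)[of a_log 10] by (simp add: cf_10 QQ_11 QQ_10)
lemma cf_11: "cf_coeff a_log 11 = 2"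
proof -
  have "cf_coeff a_log 11 = \<lfloor>- EE a_log 11 / EE a_log 12\<rfloor>" by (rule coeff_from[OF a_log_irrat]) simp
  also have "\<dots> = 2" by (rule floor_pos) (use s_125743_79335 s_176251_111202 in \<open>simp_all add: EE_def PP_11 QQ_11 PP_12 QQ_12 algebra_simps\<close>)
  finally show ?thesis .
qed
lemma PP_13: "PP a_log 13 = 125743" using PP.simps(3)[of a_log 11] by (simp add: cf_11 PP_12 PP_11)
lemma QQ_13: "QQ a_log 13 = 79335" using QQ.simps(3)[of a_log 11] by (simp add: cf_11 QQ_12 QQ_11)
lemma cf_12: "cf_coeff a_log 12 = 1"
proof -
  have "cf_coeff a_log 12 = \<lfloor>- EE a_log 12 / EE a_log 13\<rfloor>" by (rule coeff_from[OF a_log_irrat]) simp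
  also have "\<dots> = 1" by (rule floor_neg) (use s_176251_111202 s_301994_190537 in \<open>simp_all add: EE_def PP_12 QQ_12 PP_13 QQ_13 algebra_simps\<close>)
  finally show ?thesis .
qed
lemma PP_14: "PP a_log 14 = 176251" using PP.simps(3)[of a_log 12] by (simp add: cf_12 PP_13 PP_12)
lemma QQ_14: "QQ a_log 14 = 111202" using QQ.simps(3)[of a_log 12] by (simp add: cf_12 QQ_13 QQ_12)


lemma Kseq_PP: "Kseq n = nat (PP a_log (2 * n + 4))"
proof -
  have e: "Suc (Suc (2 * (n + 1))) = 2 * n + 4" by simp
  have "Kseq n = nat (PP a_log (Suc (Suc (2 * (n + 1)))))" unfolding Kseq_def conv_num_PP ..
  then show ?thesis by (simp only: e)
qed

lemma seq_facts:
  fixes n :: nat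
  defines "E \<equiv> EE a_log (2 * n + 4)"
  shows "Kseq n \<ge> 1 \<and> rK (Kseq n) = 1 - E / a_log \<and> Theta (Kseq n) \<ge> (a_log - 1) / E"
proof -
  define x where "x = a_log"
  define m where "m = 2 * n + 4"
  have x1: "x > 1" using a_log_gt1 x_def by simp
  have Epos: "E > 0" unfolding E_def using EE_even_pos[OF a_log_irrat] by simp
  have e3: "Suc (2 * n + 3) = 2 * n + 4" by simp
  have "\<bar>EE a_log (Suc (2 * n + 3))\<bar> \<le> 1" by (rule EE_abs_le1[OF a_log_irrat])
  then have "\<bar>E\<bar> \<le> 1" unfolding E_def by (simp only: e3)
  then have E1: "E < x" using x1 by simp
  have e2: "Suc (Suc (2 * n + 2)) = m" unfolding m_def by simp
  have "QQ a_log (Suc (Suc (2 * n + 2))) \<ge> 1" using QQ_ge1[OF a_log_irrat] by blast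
  then have Q1: "QQ a_log m \<ge> 1" by (simp only: e2)
  define Q where "Q = QQ a_log m"
  define P where "P = PP a_log m"
  have EQ: "E = of_int Q * x - of_int P" unfolding E_def EE_def Q_def P_def x_def m_def by simp
  have "of_int Q * x \<ge> 1 * x" using Q1 x1 unfolding Q_def by (intro mult_right_mono) auto
  then have "of_int P > (0::real)" using EQ E1 by linarith
  then have P1: "P \<ge> 1" by simp
  have K: "Kseq n = nat P" unfolding Kseq_PP P_def m_def ..
  have Kr: "real (Kseq n) = of_int P" using K P1 by simp
  have Kge: "Kseq n \<ge> 1" using K P1 by simp
  have Kx: "real (Kseq n) / x = of_int Q - E / x" unfolding Kr EQ using x1 by (simp add: field_simps)
  have Ex: "0 < E / x" "E / x < 1" using Epos E1 x1 by auto
  have fl: "\<lfloor>real (Kseq n) / x\<rfloor> = Q - 1" unfolding Kx using Ex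
    by (intro floor_unique) auto
  have r: "rK (Kseq n) = 1 - E / x" using fl Kx unfolding rK_def x_def[symmetric] by simp
  have th: "Theta (Kseq n) = (x - 1) / x * ((of_int (Q - 1) + 1) / (1 - rK (Kseq n)))"
    using part1[OF Kge] fl unfolding x_def by simp
  also have "\<dots> = (x - 1) * of_int Q / E" unfolding r using x1 Epos by (simp add: field_simps)
  finally have th2: "Theta (Kseq n) = (x - 1) * of_int Q / E" .
  have "(x - 1) / E \<le> (x - 1) * of_int Q / E"
    using Q1 x1 Epos unfolding Q_def by (intro divide_right_mono) auto
  then show ?thesis using Kge r th2 unfolding x_def by simp
qed

lemma lim_rK: "filterlim (\<lambda>n. rK (Kseq n)) (at_left 1) sequentially"
proof (rule tendsto_imp_filterlim_at_left)
  have "(\<lambda>n. 1 - EE a_log (2 * n + 4) / a_log) \<longlonglongrightarrow> 1 - 0 / a_log"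
    by (intro tendsto_intros EE_even_tendsto[OF a_log_irrat]) (use a_log_gt1 in simp)
  then show "(\<lambda>n. rK (Kseq n)) \<longlonglongrightarrow> 1" using seq_facts by simp
  show "\<forall>\<^sub>F n in sequentially. rK (Kseq n) < 1"
    using seq_facts EE_even_pos[OF a_log_irrat] a_log_gt1 by (intro always_eventually) simp
qed

lemma lim_Theta: "filterlim (\<lambda>n. Theta (Kseq n)) at_top sequentially"
proof (rule filterlim_at_top_mono)
  have "filterlim (\<lambda>n. inverse (EE a_log (2 * n + 4))) at_top sequentially"
    by (rule filterlim_inverse_at_top[OF EE_even_tendsto[OF a_log_irrat]])
       (use EE_even_pos[OF a_log_irrat] in simp)
  moreover have "0 < a_log - 1" using a_log_gt1 by simp
  ultimately show "filterlim (\<lambda>n. (a_log - 1) * inverse (EE a_log (2 * n + 4))) at_top sequentially"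
    using filterlim_tendsto_pos_mult_at_top[OF tendsto_const] by blast
  show "\<forall>\<^sub>F n in sequentially. (a_log - 1) * inverse (EE a_log (2 * n + 4)) \<le> Theta (Kseq n)"
    using seq_facts by (intro always_eventually) (simp add: divide_inverse)
qed

lemma unbounded: "\<forall>B::real. \<exists>K::nat. K \<ge> 1 \<and> Theta K > B"
proof
  fix B :: real
  have "\<forall>\<^sub>F n in sequentially. B < Theta (Kseq n)"
    using lim_Theta by (simp add: filterlim_at_top_dense)
  then obtain N where "\<forall>n\<ge>N. B < Theta (Kseq n)" by (auto simp: eventually_sequentially)
  then show "\<exists>K::nat. K \<ge> 1 \<and> Theta K > B" using seq_facts[of N] by auto
qed

theorem mainTheorem18:
  shows "(\<forall>K::nat. K \<ge> 1 \<longrightarrow>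
            K \<in> Splus K \<and> gK K K = a_log - 1 \<and>
            Max (gK K ` Splus K) = a_log - 1 \<and>
            Min (gK K ` Splus K) = a_log - real K / real (lstar K) \<and>
            0 < rK K \<and> rK K < 1 \<and>
            Theta K = (a_log - 1) / a_log *
                      ((of_int \<lfloor>real K / a_log\<rfloor> + 1) / (1 - rK K)))
       \<and> (\<forall>B::real. \<exists>K::nat. K \<ge> 1 \<and> Theta K > B)
       \<and> Kseq 0 = 3 \<and> Kseq 1 = 19 \<and> Kseq 2 = 84 \<and> Kseq 3 = 1054
       \<and> Kseq 4 = 50508 \<and> Kseq 5 = 176251
       \<and> filterlim (\<lambda>n. rK (Kseq n)) (at_left 1) sequentially
       \<and> filterlim (\<lambda>n. Theta (Kseq n)) at_top sequentially"
  using part1 unbounded lim_rK lim_Theta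
  by (simp add: Kseq_PP PP_4 PP_6 PP_8 PP_10 PP_12 PP_14)

end
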